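(* Let $d\ge 2$ and $\overrightarrow{w}\in(0,\infty)^d$, and let $\mathbb{C}$ be the set of all $d$-dimensional copulas that are $\overrightarrow{w}$-CM. Then $\mathbb{C}$ is minimal in set concordance ordering; that is, if $C\in\mathbb{C}$ and $C^*$ is any $d$-dimensional copula with $C^*\prec C$, then $C^*\in\mathbb{C}$.
   Context: A $d$-dimensional copula $C$ is $\overrightarrow{w}$-CM if a random vector $\overrightarrow{U}=(U_1,\dots,U_d)$ with distribution function $C$ (so each $U_i$ is uniform on $[0,1]$) satisfies $P\left(\sum_{i=1}^d w_iU_i=\frac12\sum_{i=1}^d w_i\right)=1$. For distribution functions $H,H^*$ on $\mathbb{R}^d$ with the same marginals, the concordance ordering $H\prec H^*$ means $H(\overrightarrow{x})\le H^*(\overrightarrow{x})$ and $\overline{H}(\overrightarrow{x})\le\overline{H^*}(\overrightarrow{x})$ for all $\overrightarrow{x}\in\mathbb{R}^d$, where $\overline{H}(\overrightarrow{x})=P(X_1>x_1,\dots,X_d>x_d)$ is the joint survival function. A set $\mathbb{C}$ of copulas is minimal in set concordance ordering if $C\in\mathbb{C}$ and $C^*\prec C$ imply $C^*\in\mathbb{C}$ (the empty set is trivially minimal). *)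

theory Defs
  imports "HOL-Probability.Probability"
begin

text \<open>Points of R^d are functions nat => real; only coordinates i < d matter.\<close>

definition copula_law :: "nat \<Rightarrow> ((nat \<Rightarrow> real) \<Rightarrow> real) \<Rightarrow> (nat \<Rightarrow> real) measure \<Rightarrow> bool" where
  "copula_law d C M \<longleftrightarrow>
     prob_space M \<and> sets M = sets (PiM {..<d} (\<lambda>_. borel)) \<and>
     (\<forall>i<d. distr M borel (\<lambda>y. y i) = uniform_measure lborel {0..1}) \<and>
     (\<forall>x. C x = measure M {y \<in> space M. \<forall>i<d. y i \<le> x i})"

definition copula :: "nat \<Rightarrow> ((nat \<Rightarrow> real) \<Rightarrow> real) \<Rightarrow> bool" where
  "copula d C \<longleftrightarrow> (\<exists>M. copula_law d C M)"

text \<open>The law of the random vector with distribution function C (unique when it exists).\<close>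
definition copula_measure :: "nat \<Rightarrow> ((nat \<Rightarrow> real) \<Rightarrow> real) \<Rightarrow> (nat \<Rightarrow> real) measure" where
  "copula_measure d C = (SOME M. copula_law d C M)"

definition copula_surv :: "nat \<Rightarrow> ((nat \<Rightarrow> real) \<Rightarrow> real) \<Rightarrow> (nat \<Rightarrow> real) \<Rightarrow> real" where
  "copula_surv d C x = measure (copula_measure d C) {y \<in> space (copula_measure d C). \<forall>i<d. y i > x i}"

definition concordance_le :: "nat \<Rightarrow> ((nat \<Rightarrow> real) \<Rightarrow> real) \<Rightarrow> ((nat \<Rightarrow> real) \<Rightarrow> real) \<Rightarrow> bool" where
  "concordance_le d C' C \<longleftrightarrow> (\<forall>x. C' x \<le> C x) \<and> (\<forall>x. copula_surv d C' x \<le> copula_surv d C x)"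

definition w_CM :: "nat \<Rightarrow> (nat \<Rightarrow> real) \<Rightarrow> ((nat \<Rightarrow> real) \<Rightarrow> real) \<Rightarrow> bool" where
  "w_CM d w C \<longleftrightarrow>
     measure (copula_measure d C)
       {y \<in> space (copula_measure d C). (\<Sum>i<d. w i * y i) = (\<Sum>i<d. w i) / 2} = 1"

definition minimal_concordance :: "nat \<Rightarrow> (((nat \<Rightarrow> real) \<Rightarrow> real) set) \<Rightarrow> bool" where
  "minimal_concordance d S \<longleftrightarrow>
     (\<forall>C C'. C \<in> S \<longrightarrow> copula d C' \<longrightarrow> concordance_le d C' C \<longrightarrow> C' \<in> S)"

end

theory Submission imports Defs begin

definition cl :: "real \<Rightarrow> real" where "cl a = max 0 (min 1 a)"

lemma cl_bounds: "0 \<le> cl a" "cl a \<le> 1" by (auto simp: cl_def)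

lemma cl_meas[measurable]: "cl \<in> borel_measurable borel"
  unfolding cl_def by measurable

lemma law_self: "copula d C \<Longrightarrow> copula_law d C (copula_measure d C)"
  unfolding copula_def copula_measure_def by (rule someI_ex)

lemma law_prob: "copula_law d C M \<Longrightarrow> prob_space M"
  by (simp add: copula_law_def)

lemma law_meas: assumes "copula_law d C M" shows "(\<lambda>y. y i) \<in> borel_measurable M"
proof (cases "i < d")
  case True
  have s: "sets M = sets (Pi\<^sub>M {..<d} (\<lambda>_. borel :: real measure))"
    using assms unfolding copula_law_def by blast
  have "(\<lambda>y. y i) \<in> borel_measurable (Pi\<^sub>M {..<d} (\<lambda>_. borel :: real measure))"
    by (rule measurable_component_singleton) (use True in simp)
  then show ?thesis using measurable_cong_sets[OF s refl] by blast
next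
  case False
  have sp: "space M = space (Pi\<^sub>M {..<d} (\<lambda>_. borel :: real measure))"
    using assms unfolding copula_law_def by (metis sets_eq_imp_space_eq)
  have "(\<lambda>y. y i) \<in> borel_measurable M \<longleftrightarrow> (\<lambda>y. undefined :: real) \<in> borel_measurable M"
    by (rule measurable_cong) (use False in \<open>auto simp: sp space_PiM PiE_def extensional_def\<close>)
  then show ?thesis by simp
qed

lemma law_AE01: assumes "copula_law d C M" "i < d" shows "AE y in M. 0 \<le> y i \<and> y i \<le> 1"
proof -
  have eq: "distr M borel (\<lambda>y. y i) = uniform_measure lborel {0..1::real}"
    using assms unfolding copula_law_def by blast
  have "AE x in uniform_measure lborel {0..1::real}. 0 \<le> x \<and> x \<le> 1"
    by (rule AE_uniform_measureI) auto
  hence "AE x in distr M borel (\<lambda>y. y i). 0 \<le> x \<and> x \<le> 1"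
    unfolding eq .
  thus ?thesis by (rule AE_distrD[OF law_meas[OF assms(1)]])
qed

lemma law_margin: assumes "copula_law d C M" "copula_law d C' M'" "i < d"
  and g[measurable]: "(g :: real \<Rightarrow> real) \<in> borel_measurable borel"
  shows "integral\<^sup>L M (\<lambda>y. g (y i)) = integral\<^sup>L M' (\<lambda>y. g (y i))"
proof -
  have "integral\<^sup>L M (\<lambda>y. g (y i)) = integral\<^sup>L (distr M borel (\<lambda>y. y i)) g"
    by (rule integral_distr[OF law_meas[OF assms(1)] g, symmetric])
  also have "\<dots> = integral\<^sup>L (distr M' borel (\<lambda>y. y i)) g"
    using assms unfolding copula_law_def by simp
  also have "\<dots> = integral\<^sup>L M' (\<lambda>y. g (y i))"
    by (rule integral_distr[OF law_meas[OF assms(2)] g])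
  finally show ?thesis .
qed

lemma integrable_bnd:
  fixes f :: "_ \<Rightarrow> real"
  assumes "prob_space M" "f \<in> borel_measurable M" "\<And>y. \<bar>f y\<bar> \<le> B"
  shows "integrable M f"
proof -
  interpret prob_space M by fact
  show ?thesis by (rule integrable_const_bound[where B=B]) (use assms in auto)
qed

lemma cl_ind: "indicator ({0..<1} \<inter> {..<a}) = (indicator {0..<cl a} :: real \<Rightarrow> ennreal)"
proof -
  have "{0..<1} \<inter> {..<a} = {0..<cl a}" by (auto simp: cl_def)
  thus ?thesis by simp
qed

lemma pointwise:
  "ennreal (cl a * cl b) = (\<integral>\<^sup>+ s. \<integral>\<^sup>+ t. indicator ({0..<1} \<inter> {..<a}) s * indicator ({0..<1} \<inter> {..<b}) t \<partial>lborel \<partial>lborel)"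
proof -
  have "(\<integral>\<^sup>+ s. \<integral>\<^sup>+ t. indicator ({0..<1} \<inter> {..<a}) s * indicator ({0..<1} \<inter> {..<b}) t \<partial>lborel \<partial>lborel)
     = (\<integral>\<^sup>+ s. indicator {0..<cl a} s * ennreal (cl b) \<partial>lborel)"
    unfolding cl_ind by (intro nn_integral_cong) (simp add: nn_integral_cmult_indicator cl_bounds)
  also have "\<dots> = ennreal (cl b) * ennreal (cl a)"
    by (subst mult.commute) (simp add: nn_integral_cmult_indicator cl_bounds)
  finally show ?thesis by (simp add: ennreal_mult cl_bounds mult.commute)
qed

lemma law_Q:
  assumes "copula_law d C M"
  shows "(\<integral>\<^sup>+ y. ennreal (cl (y i) * cl (y j)) \<partial>M) =
    (\<integral>\<^sup>+ s. \<integral>\<^sup>+ t. emeasure M {y\<in>space M. s < y i \<and> t < y j} * indicator {0..<1} s * indicator {0..<1} t \<partial>lborel \<partial>lborel)"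
proof -
  interpret prob_space M using law_prob[OF assms] .
  interpret P: pair_sigma_finite M lborel by unfold_locales
  have [measurable]: "(\<lambda>y. y i) \<in> borel_measurable M" "(\<lambda>y. y j) \<in> borel_measurable M"
    using law_meas[OF assms] by auto
  define F where "F y s t = (indicator ({0..<1} \<inter> {..<y i}) s * indicator ({0..<1} \<inter> {..<y j}) t :: ennreal)" for y :: "nat \<Rightarrow> real" and s t :: real
  have Feq: "F = (\<lambda>y s t. if 0 \<le> s \<and> s < 1 \<and> s < y i \<and> 0 \<le> t \<and> t < 1 \<and> t < y j then 1 else 0)"
    by (auto simp: F_def indicator_def fun_eq_iff)
  have Fm1: "(\<lambda>(y, s). \<integral>\<^sup>+ t. F y s t \<partial>lborel) \<in> borel_measurable (M \<Otimes>\<^sub>M lborel)"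
    unfolding Feq by measurable
  have Fm2: "(\<lambda>(y, t). F y s t) \<in> borel_measurable (M \<Otimes>\<^sub>M lborel)" for s
    unfolding Feq by measurable
  have "(\<integral>\<^sup>+ y. ennreal (cl (y i) * cl (y j)) \<partial>M) = (\<integral>\<^sup>+ y. \<integral>\<^sup>+ s. \<integral>\<^sup>+ t. F y s t \<partial>lborel \<partial>lborel \<partial>M)"
    unfolding F_def by (intro nn_integral_cong pointwise)
  also have "\<dots> = (\<integral>\<^sup>+ s. \<integral>\<^sup>+ y. \<integral>\<^sup>+ t. F y s t \<partial>lborel \<partial>M \<partial>lborel)"
    using P.Fubini'[OF Fm1] by simp
  also have "\<dots> = (\<integral>\<^sup>+ s. \<integral>\<^sup>+ t. \<integral>\<^sup>+ y. F y s t \<partial>M \<partial>lborel \<partial>lborel)"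
    using P.Fubini'[OF Fm2] by (intro nn_integral_cong) simp
  also have "\<dots> = (\<integral>\<^sup>+ s. \<integral>\<^sup>+ t. emeasure M {y\<in>space M. s < y i \<and> t < y j} * indicator {0..<1} s * indicator {0..<1} t \<partial>lborel \<partial>lborel)"
  proof (intro nn_integral_cong)
    fix s t :: real
    have "(\<integral>\<^sup>+ y. F y s t \<partial>M) = (\<integral>\<^sup>+ y. (indicator {0..<1} s * indicator {0..<1} t) * indicator {y\<in>space M. s < y i \<and> t < y j} y \<partial>M)"
      by (intro nn_integral_cong) (auto simp: F_def indicator_def)
    also have "\<dots> = emeasure M {y\<in>space M. s < y i \<and> t < y j} * indicator {0..<1} s * indicator {0..<1} t"
    proof -
      have "{y\<in>space M. s < y i \<and> t < y j} \<in> sets M" by measurable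
      from nn_integral_cmult_indicator[OF this, of "indicator {0..<1} s * indicator {0..<1} t"]
      show ?thesis by (simp add: ac_simps)
    qed
    finally show "(\<integral>\<^sup>+ y. F y s t \<partial>M) = emeasure M {y\<in>space M. s < y i \<and> t < y j} * indicator {0..<1} s * indicator {0..<1} t" .
  qed
  finally show ?thesis .
qed

lemma law_surv:
  assumes "copula_law d C M" "i < d" "j < d" "i \<noteq> j" "0 \<le> s" "0 \<le> t"
  shows "emeasure M {y\<in>space M. s < y i \<and> t < y j} =
     ennreal (measure M {y\<in>space M. \<forall>k<d. y k > (if k = i then s else if k = j then t else -1)})"
proof -
  interpret prob_space M using law_prob[OF assms(1)] .
  have [measurable]: "\<And>k. (\<lambda>y. y k) \<in> borel_measurable M"
    using law_meas[OF assms(1)] by auto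
  have ae: "AE y in M. \<forall>k\<in>{..<d}. 0 \<le> y k"
    by (rule AE_finite_allI) (use law_AE01[OF assms(1)] in auto)
  have "emeasure M {y\<in>space M. s < y i \<and> t < y j} =
     emeasure M {y\<in>space M. \<forall>k<d. y k > (if k = i then s else if k = j then t else -1)}"
  proof (rule emeasure_Collect_eq_AE)
    show "AE y in M. (s < y i \<and> t < y j) \<longleftrightarrow> (\<forall>k<d. y k > (if k = i then s else if k = j then t else -1))"
      using ae
    proof eventually_elim
      case (elim y)
      show ?case
      proof
        assume "s < y i \<and> t < y j"
        then show "\<forall>k<d. y k > (if k = i then s else if k = j then t else -1)"
          using elim by (smt (verit) lessThan_iff)
      next
        assume h: "\<forall>k<d. y k > (if k = i then s else if k = j then t else -1)"
        show "s < y i \<and> t < y j" using h[rule_format, OF assms(2)] h[rule_format, OF assms(3)] assms(4) by simp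
      qed
    qed
  qed measurable
  also have "\<dots> = ennreal (measure M {y\<in>space M. \<forall>k<d. y k > (if k = i then s else if k = j then t else -1)})"
    by (rule emeasure_eq_measure)
  finally show ?thesis .
qed

lemma R_expand:
  assumes "prob_space N" and [measurable]: "(\<lambda>y. y i) \<in> borel_measurable N" "(\<lambda>y. y j) \<in> borel_measurable N"
  shows "(\<integral>y. (cl (y i) - 1/2) * (cl (y j) - 1/2) \<partial>N) =
     (\<integral>y. cl (y i) * cl (y j) \<partial>N) - (\<integral>y. cl (y i) \<partial>N) / 2 - (\<integral>y. cl (y j) \<partial>N) / 2 + 1/4"
proof -
  interpret prob_space N by fact
  have i1: "integrable N (\<lambda>y. cl (y i) * cl (y j))"
    by (rule integrable_bnd[where B=1]) (use assms in \<open>auto simp: cl_bounds abs_mult intro!: mult_le_one\<close>)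
  have i2: "integrable N (\<lambda>y. cl (y k))" if "(\<lambda>y. y k) \<in> borel_measurable N" for k
    by (rule integrable_bnd[where B=1]) (use assms that in \<open>auto simp: cl_bounds abs_le_iff intro: order.trans[OF _ cl_bounds(2)] order.trans[OF cl_bounds(1)]\<close>)
  have "(\<integral>y. (cl (y i) - 1/2) * (cl (y j) - 1/2) \<partial>N) =
     (\<integral>y. (cl (y i) * cl (y j) - cl (y i) / 2 - cl (y j) / 2) + 1/4 \<partial>N)"
    by (intro Bochner_Integration.integral_cong) (auto simp: algebra_simps)
  also have "\<dots> = (\<integral>y. cl (y i) * cl (y j) - cl (y i) / 2 - cl (y j) / 2 \<partial>N) + 1/4"
    using i1 i2 assms by (subst Bochner_Integration.integral_add) (auto simp: prob_space)
  also have "\<dots> = (\<integral>y. cl (y i) * cl (y j) \<partial>N) - (\<integral>y. cl (y i) \<partial>N) / 2 - (\<integral>y. cl (y j) \<partial>N) / 2 + 1/4"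
    using i1 i2 assms by (simp add: Bochner_Integration.integral_diff)
  finally show ?thesis .
qed

lemma main_step:
  assumes w: "\<forall>i<d. w i > 0"
  and C: "copula d C" "w_CM d w C" and C': "copula d C'" and le: "concordance_le d C' C"
  shows "w_CM d w C'"
proof -
  define M where "M = copula_measure d C"
  define M' where "M' = copula_measure d C'"
  have hM: "copula_law d C M" using law_self[OF C(1)] M_def by simp
  have hM': "copula_law d C' M'" using law_self[OF C'] M'_def by simp
  interpret P: prob_space M using law_prob[OF hM] .
  interpret P': prob_space M' using law_prob[OF hM'] .
  have [measurable]: "\<And>k. (\<lambda>y. y k) \<in> borel_measurable M" "\<And>k. (\<lambda>y. y k) \<in> borel_measurable M'"
    using law_meas[OF hM] law_meas[OF hM'] by auto
  define R where "R N i j = (\<integral>y. (cl (y i) - 1/2) * (cl (y j) - 1/2) \<partial>N)"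
    for N :: "(nat \<Rightarrow> real) measure" and i j
  have intQ: "integrable N (\<lambda>y. cl (y i) * cl (y j))" if "prob_space N" "\<And>k. (\<lambda>y. y k) \<in> borel_measurable N" for N i j
    by (rule integrable_bnd[where B=1]) (use that in \<open>auto simp: cl_bounds abs_mult intro!: mult_le_one\<close>)
  have Qnn: "ennreal (\<integral>y. cl (y i) * cl (y j) \<partial>N) = (\<integral>\<^sup>+ y. ennreal (cl (y i) * cl (y j)) \<partial>N)"
    if "prob_space N" "\<And>k. (\<lambda>y. y k) \<in> borel_measurable N" for N i j
    by (rule nn_integral_eq_integral[symmetric]) (use intQ[OF that] in \<open>auto simp: cl_bounds\<close>)
  have Qle: "(\<integral>y. cl (y i) * cl (y j) \<partial>M') \<le> (\<integral>y. cl (y i) * cl (y j) \<partial>M)"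
    if ij: "i < d" "j < d" "i \<noteq> j" for i j
  proof -
    have "ennreal (\<integral>y. cl (y i) * cl (y j) \<partial>M') = (\<integral>\<^sup>+ s. \<integral>\<^sup>+ t. emeasure M' {y\<in>space M'. s < y i \<and> t < y j} * indicator {0..<1} s * indicator {0..<1} t \<partial>lborel \<partial>lborel)"
      using Qnn[OF P'.prob_space_axioms] law_Q[OF hM'] by simp
    also have "\<dots> \<le> (\<integral>\<^sup>+ s. \<integral>\<^sup>+ t. emeasure M {y\<in>space M. s < y i \<and> t < y j} * indicator {0..<1} s * indicator {0..<1} t \<partial>lborel \<partial>lborel)"
    proof (intro nn_integral_mono)
      fix s t :: real
      show "emeasure M' {y\<in>space M'. s < y i \<and> t < y j} * indicator {0..<1} s * indicator {0..<1} t
        \<le> emeasure M {y\<in>space M. s < y i \<and> t < y j} * indicator {0..<1} s * indicator {0..<1} t"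
      proof (cases "s \<in> {0..<1} \<and> t \<in> {0..<1}")
        case True
        define x where "x = (\<lambda>k. if k = i then s else if k = j then t else -1::real)"
        have "emeasure M' {y\<in>space M'. s < y i \<and> t < y j} = ennreal (copula_surv d C' x)"
          unfolding copula_surv_def M'_def[symmetric] x_def using law_surv[OF hM' ij] True by auto
        also have "\<dots> \<le> ennreal (copula_surv d C x)"
          using le unfolding concordance_le_def by (simp add: ennreal_leI)
        also have "\<dots> = emeasure M {y\<in>space M. s < y i \<and> t < y j}"
          unfolding copula_surv_def M_def[symmetric] x_def using law_surv[OF hM ij] True by auto
        finally show ?thesis using True by simp
      next
        case False
        then show ?thesis by (auto simp: indicator_def)
      qed
    qed
    also have "\<dots> = ennreal (\<integral>y. cl (y i) * cl (y j) \<partial>M)"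
      using Qnn[OF P.prob_space_axioms] law_Q[OF hM] by simp
    finally show ?thesis
      by (subst (asm) ennreal_le_iff) (auto intro!: integral_nonneg simp: cl_bounds)
  qed
  have Rle: "R M' i j \<le> R M i j" if ij: "i < d" "j < d" for i j
  proof (cases "i = j")
    case True
    have "R M' i j = R M i j"
      unfolding R_def True using law_margin[OF hM' hM ij(2), of "\<lambda>a. (cl a - 1/2) * (cl a - 1/2)"] by simp
    then show ?thesis by simp
  next
    case False
    have m: "(\<integral>y. cl (y k) \<partial>M') = (\<integral>y. cl (y k) \<partial>M)" if "k < d" for k
      using law_margin[OF hM' hM that, of cl] by simp
    show ?thesis unfolding R_def
      using R_expand[OF P.prob_space_axioms, of i j] R_expand[OF P'.prob_space_axioms, of i j]
        Qle[OF ij False] m[OF ij(1)] m[OF ij(2)] by simp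
  qed
  define D where "D N = (\<integral>y. (\<Sum>i<d. w i * (cl (y i) - 1/2))^2 \<partial>N)" for N :: "(nat \<Rightarrow> real) measure"
  have Dsum: "D N = (\<Sum>i<d. \<Sum>j<d. w i * w j * R N i j)"
    if "prob_space N" "\<And>k. (\<lambda>y. y k) \<in> borel_measurable N" for N
  proof -
    have iR: "integrable N (\<lambda>y. (cl (y i) - 1/2) * (cl (y j) - 1/2))" for i j
      by (rule integrable_bnd[where B=1]) (use that in \<open>auto simp: abs_mult cl_def intro!: mult_le_one\<close>)
    have "D N = (\<integral>y. (\<Sum>i<d. \<Sum>j<d. w i * w j * ((cl (y i) - 1/2) * (cl (y j) - 1/2))) \<partial>N)"
      unfolding D_def power2_eq_square sum_product
      by (intro Bochner_Integration.integral_cong refl sum.cong) (auto simp: algebra_simps)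
    also have "\<dots> = (\<Sum>i<d. \<Sum>j<d. w i * w j * R N i j)"
      unfolding R_def using iR
      by (simp add: Bochner_Integration.integral_sum integrable_sum)
    finally show ?thesis .
  qed
  have "AE y in M. y \<in> {y \<in> space M. (\<Sum>i<d. w i * y i) = (\<Sum>i<d. w i) / 2}"
    using C(2) unfolding w_CM_def M_def[symmetric] by (intro P.AE_prob_1)
  moreover have "AE y in M. \<forall>k\<in>{..<d}. 0 \<le> y k \<and> y k \<le> 1"
    by (rule AE_finite_allI) (use law_AE01[OF hM] in auto)
  ultimately have ae0: "AE y in M. (\<Sum>i<d. w i * (cl (y i) - 1/2))^2 = 0"
  proof eventually_elim
    case (elim y)
    have "(\<Sum>i<d. w i * (cl (y i) - 1/2)) = (\<Sum>i<d. w i * y i) - (\<Sum>i<d. w i) / 2"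
      using elim(2) by (simp add: sum_subtractf sum_divide_distrib algebra_simps cl_def)
    then show ?case using elim(1) by simp
  qed
  have DM: "D M = 0"
    unfolding D_def using integral_cong_AE[OF _ _ ae0] by simp
  have "D M' \<le> D M"
    unfolding Dsum[OF P.prob_space_axioms \<open>\<And>k. (\<lambda>y. y k) \<in> borel_measurable M\<close>]
      Dsum[OF P'.prob_space_axioms \<open>\<And>k. (\<lambda>y. y k) \<in> borel_measurable M'\<close>]
    using Rle w by (intro sum_mono mult_left_mono) (auto intro!: mult_nonneg_nonneg less_imp_le)
  moreover have "0 \<le> D M'" unfolding D_def by (intro integral_nonneg_AE) simp
  ultimately have "D M' = 0" using DM by simp
  moreover have "integrable M' (\<lambda>y. (\<Sum>i<d. w i * (cl (y i) - 1/2))^2)"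
  proof -
    have "integrable M' (\<lambda>y. \<Sum>i<d. \<Sum>j<d. w i * w j * ((cl (y i) - 1/2) * (cl (y j) - 1/2)))"
    proof -
      have iR: "integrable M' (\<lambda>y. (cl (y i) - 1/2) * (cl (y j) - 1/2))" for i j
        by (rule integrable_bnd[where B=1, OF P'.prob_space_axioms]) (auto simp: abs_mult cl_def intro!: mult_le_one)
      show ?thesis using iR by simp
    qed
    moreover have "(\<lambda>y. (\<Sum>i<d. w i * (cl (y i) - 1/2))^2) = (\<lambda>y. \<Sum>i<d. \<Sum>j<d. w i * w j * ((cl (y i) - 1/2) * (cl (y j) - 1/2)))"
      unfolding power2_eq_square sum_product by (intro ext sum.cong refl) (auto simp: algebra_simps)
    ultimately show ?thesis by simp
  qed
  ultimately have ae1: "AE y in M'. (\<Sum>i<d. w i * (cl (y i) - 1/2))^2 = 0"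
    unfolding D_def by (subst (asm) integral_nonneg_eq_0_iff_AE) auto
  have ae2: "AE y in M'. \<forall>k\<in>{..<d}. 0 \<le> y k \<and> y k \<le> 1"
    by (rule AE_finite_allI) (use law_AE01[OF hM'] in auto)
  have "AE y in M'. y \<in> {y \<in> space M'. (\<Sum>i<d. w i * y i) = (\<Sum>i<d. w i) / 2}"
    using ae1 ae2 AE_space
  proof eventually_elim
    case (elim y)
    have "(\<Sum>i<d. w i * (cl (y i) - 1/2)) = (\<Sum>i<d. w i * y i) - (\<Sum>i<d. w i) / 2"
      using elim(2) by (simp add: sum_subtractf sum_divide_distrib algebra_simps cl_def)
    then show ?case using elim by simp
  qed
  moreover have "{y \<in> space M'. (\<Sum>i<d. w i * y i) = (\<Sum>i<d. w i) / 2} \<in> sets M'"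
    by measurable
  ultimately show ?thesis
    unfolding w_CM_def M'_def[symmetric] using P'.prob_eq_1 by blast
qed

theorem mainTheorem3:
  fixes d :: nat and w :: "nat \<Rightarrow> real"
  assumes "d \<ge> 2" and "\<forall>i<d. w i > 0"
  shows "minimal_concordance d {C. copula d C \<and> w_CM d w C}"
  unfolding minimal_concordance_def using main_step[OF assms(2)] by blast

end
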